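(* Let $n\ge1$, $m\ge2$, and let $\sigma_0,\dots,\sigma_m$ be the Coxeter generators of the affine Weyl group $\tilde C_m$. (1) Setting $\sigma_i(v)=s_i(v)$ for each vertex $v$ of $Y_{n,m}$ and $0\le i\le m$, and extending multiplicatively, gives a well-defined action of $\tilde C_m$ on the vertex set of $Y_{n,m}$. (2) $Y_{n,m}$ is the Schreier graph of $\tilde C_m$ with respect to the generating set $\{\sigma_0,\dots,\sigma_m\}$ and this action.
   Context: The Yoke graph $Y_{n,m}$ has vertices the tuples $v=(v_0,\dots,v_{m+1})$ with $v_0,v_{m+1}\in\mathbb{Z}_n$, $v_1,\dots,v_m\in\{0,1\}$, $\sum v_i\equiv0\pmod n$; $u\sim v$ iff there is $0\le i\le m$ with $u_j=v_j$ for $j\notin\{i,i+1\}$ and either ($u_i=v_i+1$, $u_{i+1}=v_{i+1}-1$) or ($u_i=v_i-1$, $u_{i+1}=v_{i+1}+1$), bucket entries mod $n$. For $0\le i\le m$, $\overleftarrow{s}_i(v)$ replaces $v_i,v_{i+1}$ by $v_i+1,v_{i+1}-1$, and $\overrightarrow{s}_i(v)$ by $v_i-1,v_{i+1}+1$. Define $s_0(v)=\overleftarrow{s}_0(v)$ if $v_1=1$, $\overrightarrow{s}_0(v)$ if $v_1=0$; $s_m(v)=\overleftarrow{s}_m(v)$ if $v_m=0$, $\overrightarrow{s}_m(v)$ if $v_m=1$; for $1\le i\le m-1$, $s_i$ swaps $v_i$ and $v_{i+1}$. $\tilde C_m$ is the group generated by $\sigma_0,\dots,\sigma_m$ with relations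 $\sigma_i^2=1$, $(\sigma_i\sigma_j)^2=1$ for $|i-j|>1$, $(\sigma_i\sigma_{i+1})^3=1$ for $1\le i\le m-2$, $(\sigma_0\sigma_1)^4=(\sigma_{m-1}\sigma_m)^4=1$. The Schreier graph of a group acting on a set $V$ with respect to a symmetric generating set $S$ is the (simple) graph on $V$ in which $x$ and $y\ne x$ are adjacent iff $y=s(x)$ for some $s\in S$. *)

theory Defs
  imports Main
begin

text \<open>Vertices of the Yoke graph Y_{n,m}: a tuple (v_0,...,v_{m+1}) is represented as a
  function nat => int, with v_0, v_{m+1} taken as representatives in {0..<n} of Z_n,
  v_1..v_m in {0,1}, and v_j = 0 for j > m+1 (padding).\<close>

definition yoke_V :: "nat \<Rightarrow> nat \<Rightarrow> (nat \<Rightarrow> int) set" where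
  "yoke_V n m = {v. v 0 \<in> {0..<int n} \<and> v (m+1) \<in> {0..<int n}
      \<and> (\<forall>j. 1 \<le> j \<and> j \<le> m \<longrightarrow> v j \<in> {0,1})
      \<and> (\<forall>j>m+1. v j = 0)
      \<and> (\<Sum>j\<le>m+1. v j) mod int n = 0}"

definition entry_add :: "nat \<Rightarrow> nat \<Rightarrow> nat \<Rightarrow> int \<Rightarrow> int \<Rightarrow> int" where
  "entry_add n m j x d = (if j = 0 \<or> j = m+1 then (x + d) mod int n else x + d)"

definition yoke_adj :: "nat \<Rightarrow> nat \<Rightarrow> (nat \<Rightarrow> int) \<Rightarrow> (nat \<Rightarrow> int) \<Rightarrow> bool" where
  "yoke_adj n m u v \<longleftrightarrow> (\<exists>i\<le>m. (\<forall>j. j \<noteq> i \<and> j \<noteq> i+1 \<longrightarrow> u j = v j) \<and>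
      ((u i = entry_add n m i (v i) 1 \<and> u (i+1) = entry_add n m (i+1) (v (i+1)) (-1)) \<or>
       (u i = entry_add n m i (v i) (-1) \<and> u (i+1) = entry_add n m (i+1) (v (i+1)) 1)))"

definition s_left :: "nat \<Rightarrow> nat \<Rightarrow> nat \<Rightarrow> (nat \<Rightarrow> int) \<Rightarrow> (nat \<Rightarrow> int)" where
  "s_left n m i v = v(i := entry_add n m i (v i) 1, i+1 := entry_add n m (i+1) (v (i+1)) (-1))"

definition s_right :: "nat \<Rightarrow> nat \<Rightarrow> nat \<Rightarrow> (nat \<Rightarrow> int) \<Rightarrow> (nat \<Rightarrow> int)" where
  "s_right n m i v = v(i := entry_add n m i (v i) (-1), i+1 := entry_add n m (i+1) (v (i+1)) 1)"

definition s_gen :: "nat \<Rightarrow> nat \<Rightarrow> nat \<Rightarrow> (nat \<Rightarrow> int) \<Rightarrow> (nat \<Rightarrow> int)" where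
  "s_gen n m i v =
     (if i = 0 then (if v 1 = 1 then s_left n m 0 v else s_right n m 0 v)
      else if i = m then (if v m = 0 then s_left n m m v else s_right n m m v)
      else v(i := v (i+1), i+1 := v i))"

text \<open>Relators of the Coxeter presentation of affine C_m, as words in the generator
  indices 0..m (all generators are involutions, so words without inverse letters suffice).\<close>
definition relators :: "nat \<Rightarrow> nat list set" where
  "relators m =
     {[i,i] | i. i \<le> m}
   \<union> {[i,j,i,j] | i j. i \<le> m \<and> j \<le> m \<and> (i + 1 < j \<or> j + 1 < i)}
   \<union> {concat (replicate 3 [i, i+1]) | i. 1 \<le> i \<and> i + 2 \<le> m}
   \<union> {concat (replicate 4 [0, 1])}
   \<union> {concat (replicate 4 [m-1, m])}"

inductive word_eq :: "nat \<Rightarrow> nat list \<Rightarrow> nat list \<Rightarrow> bool" for m where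
  rel: "r \<in> relators m \<Longrightarrow> word_eq m (a @ r @ b) (a @ b)"
| refl: "word_eq m w w"
| sym: "word_eq m w w' \<Longrightarrow> word_eq m w' w"
| trans: "word_eq m w1 w2 \<Longrightarrow> word_eq m w2 w3 \<Longrightarrow> word_eq m w1 w3"

fun word_act :: "nat \<Rightarrow> nat \<Rightarrow> nat list \<Rightarrow> (nat \<Rightarrow> int) \<Rightarrow> (nat \<Rightarrow> int)" where
  "word_act n m [] v = v"
| "word_act n m (i # w) v = s_gen n m i (word_act n m w v)"

definition schreier_adj :: "nat \<Rightarrow> nat \<Rightarrow> (nat \<Rightarrow> int) \<Rightarrow> (nat \<Rightarrow> int) \<Rightarrow> bool" where
  "schreier_adj n m x y \<longleftrightarrow> y \<noteq> x \<and> (\<exists>i\<le>m. y = s_gen n m i x)"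

end

theory Submission
  imports Defs
begin


lemma sum_upd2:
  fixes v :: "nat \<Rightarrow> int"
  assumes "i + 1 \<le> N"
  shows "(\<Sum>j\<le>N. (v(i:=a, i+1:=b)) j) = (\<Sum>j\<le>N. v j) - v i - v (i+1) + a + b"
proof -
  have "v(i:=a, i+1:=b) = (\<lambda>j. v j + (if j = i then a - v i else 0) + (if j = i+1 then b - v (i+1) else 0))"
    by (auto simp: fun_eq_iff)
  then have "(\<Sum>j\<le>N. (v(i:=a, i+1:=b)) j) = (\<Sum>j\<le>N. v j) + (\<Sum>j\<le>N. (if j = i then a - v i else 0)) + (\<Sum>j\<le>N. (if j = i+1 then b - v (i+1) else 0))"
    by (simp add: sum.distrib)
  also have "\<dots> = (\<Sum>j\<le>N. v j) + (a - v i) + (b - v (i+1))"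
    using assms by (simp add: sum.delta)
  finally show ?thesis by simp
qed

lemma modfix: "(X + ((y + c) mod (k::int) - y - c)) mod k = X mod k"
proof -
  have h: "(y+c) div k * k + (y+c) mod k = y + c" by (rule div_mult_mod_eq)
  have "X + ((y + c) mod k - y - c) = X + (- ((y+c) div k)) * k" using h by linarith
  then show ?thesis by (simp only: mod_mult_self1)
qed

lemma VD:
  assumes "v \<in> yoke_V n m"
  shows "0 \<le> v 0" "v 0 < int n" "0 \<le> v (m+1)" "v (m+1) < int n"
    "\<And>j. 1 \<le> j \<Longrightarrow> j \<le> m \<Longrightarrow> v j = 0 \<or> v j = 1"
    "\<And>j. j > m+1 \<Longrightarrow> v j = 0"
    "(\<Sum>j\<le>m+1. v j) mod int n = 0"
  using assms unfolding yoke_V_def by auto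

lemma yoke_V_I:
  assumes "0 \<le> v 0" "v 0 < int n" "0 \<le> v (m+1)" "v (m+1) < int n"
    "\<And>j. 1 \<le> j \<Longrightarrow> j \<le> m \<Longrightarrow> v j = 0 \<or> v j = 1"
    "\<And>j. j > m+1 \<Longrightarrow> v j = 0"
    "(\<Sum>j\<le>m+1. v j) mod int n = 0"
  shows "v \<in> yoke_V n m"
  using assms unfolding yoke_V_def by auto

lemma s_gen_V:
  assumes "n \<ge> 1" "m \<ge> 2" "i \<le> m" "v \<in> yoke_V n m"
  shows "s_gen n m i v \<in> yoke_V n m"
proof -
  note D = VD[OF assms(4)]
  have sm: "(\<Sum>j\<le>m+1. v j) mod int n = 0" by (rule D(7))
  consider "i = 0" | "i = m" | "0 < i" "i < m" using assms by linarith
  then show ?thesis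
  proof cases
    case 1
    have v1: "v 1 = 0 \<or> v 1 = 1" using D(5)[of 1] assms by auto
    define a where "a = (if v 1 = 1 then (v 0 + 1) mod int n else (v 0 - 1) mod int n)"
    define b where "b = (if v 1 = 1 then v 1 - 1 else v 1 + 1)"
    have eq: "s_gen n m i v = v(0:=a, 1:=b)"
      using 1 assms by (auto simp: s_gen_def s_left_def s_right_def entry_add_def a_def b_def)
    have S: "(\<Sum>j\<le>m+1. (v(0:=a, 1:=b)) j) = (\<Sum>j\<le>m+1. v j) - v 0 - v 1 + a + b"
      using sum_upd2[of 0 "m+1" v a b] assms by simp
    have "((\<Sum>j\<le>m+1. v j) - v 0 - v 1 + a + b) mod int n = (\<Sum>j\<le>m+1. v j) mod int n"
    proof (cases "v 1 = 1")
      case True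
      then have "(\<Sum>j\<le>m+1. v j) - v 0 - v 1 + a + b = (\<Sum>j\<le>m+1. v j) + ((v 0 + 1) mod int n - v 0 - 1)"
        by (simp add: a_def b_def)
      then show ?thesis by (simp only: modfix)
    next
      case False
      then have "(\<Sum>j\<le>m+1. v j) - v 0 - v 1 + a + b = (\<Sum>j\<le>m+1. v j) + ((v 0 + (-1)) mod int n - v 0 - (-1))"
        by (simp add: a_def b_def)
      then show ?thesis by (simp only: modfix)
    qed
    then have sum0: "(\<Sum>j\<le>m+1. (v(0:=a, 1:=b)) j) mod int n = 0"
      using S sm by (simp only:)
    have np: "int n > 0" using assms by simp
    show ?thesis unfolding eq
    proof (rule yoke_V_I[OF _ _ _ _ _ _ sum0])
      show "\<And>j. 1 \<le> j \<Longrightarrow> j \<le> m \<Longrightarrow> (v(0:=a, 1:=b)) j = 0 \<or> (v(0:=a, 1:=b)) j = 1"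
      proof -
        fix j assume j: "1 \<le> j" "j \<le> m"
        have "v j = 0 \<or> v j = 1" using D(5)[of j] j by simp
        moreover have "j = 1 \<Longrightarrow> b = 0 \<or> b = 1" using v1 by (auto simp: b_def)
        moreover have "j \<noteq> 0" using j by simp
        ultimately show "(v(0:=a, 1:=b)) j = 0 \<or> (v(0:=a, 1:=b)) j = 1"
          by (simp add: fun_upd_def)
      qed
      show "\<And>j. j > m+1 \<Longrightarrow> (v(0:=a, 1:=b)) j = 0" using D(6) assms by simp
    qed (use D(1-4) assms np in \<open>simp_all add: a_def b_def\<close>)
  next
    case 2
    have v1: "v m = 0 \<or> v m = 1" using D(5)[of m] assms by auto
    define a where "a = (if v m = 0 then v m + 1 else v m - 1)"
    define b where "b = (if v m = 0 then (v (m+1) - 1) mod int n else (v (m+1) + 1) mod int n)"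
    have eq: "s_gen n m i v = v(m:=a, m+1:=b)"
      using 2 assms by (auto simp: s_gen_def s_left_def s_right_def entry_add_def a_def b_def)
    have S: "(\<Sum>j\<le>m+1. (v(m:=a, m+1:=b)) j) = (\<Sum>j\<le>m+1. v j) - v m - v (m+1) + a + b"
      using sum_upd2[of m "m+1" v a b] assms by simp
    have "((\<Sum>j\<le>m+1. v j) - v m - v (m+1) + a + b) mod int n = (\<Sum>j\<le>m+1. v j) mod int n"
    proof (cases "v m = 0")
      case True
      then have "(\<Sum>j\<le>m+1. v j) - v m - v (m+1) + a + b = (\<Sum>j\<le>m+1. v j) + ((v (m+1) + (-1)) mod int n - v (m+1) - (-1))"
        by (simp add: a_def b_def)
      then show ?thesis by (simp only: modfix)
    next
      case False
      then have "(\<Sum>j\<le>m+1. v j) - v m - v (m+1) + a + b = (\<Sum>j\<le>m+1. v j) + ((v (m+1) + 1) mod int n - v (m+1) - 1)"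
        using v1 by (simp add: a_def b_def)
      then show ?thesis by (simp only: modfix)
    qed
    then have sum0: "(\<Sum>j\<le>m+1. (v(m:=a, m+1:=b)) j) mod int n = 0"
      using S sm by (simp only:)
    have np: "int n > 0" using assms by simp
    show ?thesis unfolding eq
    proof (rule yoke_V_I[OF _ _ _ _ _ _ sum0])
      show "\<And>j. 1 \<le> j \<Longrightarrow> j \<le> m \<Longrightarrow> (v(m:=a, m+1:=b)) j = 0 \<or> (v(m:=a, m+1:=b)) j = 1"
      proof -
        fix j assume j: "1 \<le> j" "j \<le> m"
        have "v j = 0 \<or> v j = 1" using D(5)[of j] j by simp
        moreover have "j = m \<Longrightarrow> a = 0 \<or> a = 1" using v1 by (auto simp: a_def)
        moreover have "j \<noteq> m+1" using j by simp
        ultimately show "(v(m:=a, m+1:=b)) j = 0 \<or> (v(m:=a, m+1:=b)) j = 1"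
          by (simp add: fun_upd_def)
      qed
      show "\<And>j. j > m+1 \<Longrightarrow> (v(m:=a, m+1:=b)) j = 0" using D(6) assms by simp
    qed (use D(1-4) assms np in \<open>simp_all add: a_def b_def\<close>)
  next
    case 3
    have eq: "s_gen n m i v = v(i:=v (i+1), i+1:=v i)"
      using 3 by (auto simp: s_gen_def)
    have S: "(\<Sum>j\<le>m+1. (v(i:=v (i+1), i+1:=v i)) j) = (\<Sum>j\<le>m+1. v j)"
      using sum_upd2[of i "m+1" v "v (i+1)" "v i"] 3 by simp
    show ?thesis unfolding eq
    proof (rule yoke_V_I)
      show "\<And>j. 1 \<le> j \<Longrightarrow> j \<le> m \<Longrightarrow> (v(i:=v (i+1), i+1:=v i)) j = 0 \<or> (v(i:=v (i+1), i+1:=v i)) j = 1"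
      proof -
        fix j assume j: "1 \<le> j" "j \<le> m"
        have "v i = 0 \<or> v i = 1" using D(5)[of i] 3 by simp
        moreover have "v (i+1) = 0 \<or> v (i+1) = 1" using D(5)[of "i+1"] 3 by simp
        moreover have "v j = 0 \<or> v j = 1" using D(5)[of j] j by simp
        ultimately show "(v(i:=v (i+1), i+1:=v i)) j = 0 \<or> (v(i:=v (i+1), i+1:=v i)) j = 1"
          by (simp add: fun_upd_def)
      qed
      show "\<And>j. j > m+1 \<Longrightarrow> (v(i:=v (i+1), i+1:=v i)) j = 0" using D(6) 3 by simp
      show "(\<Sum>j\<le>m+1. (v(i:=v (i+1), i+1:=v i)) j) mod int n = 0" using S sm by (simp only:)
    qed (use D(1-4) 3 in simp_all)
  qed
qed




lemma s0_1: "v 1 = 1 \<Longrightarrow> m \<ge> 2 \<Longrightarrow> s_gen n m 0 v = v(0 := (v 0 + 1) mod int n, 1 := 0)"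
  by (simp add: s_gen_def s_left_def entry_add_def)
lemma s0_0: "v 1 \<noteq> 1 \<Longrightarrow> v 1 = 0 \<Longrightarrow> m \<ge> 2 \<Longrightarrow> s_gen n m 0 v = v(0 := (v 0 - 1) mod int n, 1 := 1)"
  by (simp add: s_gen_def s_right_def entry_add_def)
lemma sm_0: "v m = 0 \<Longrightarrow> m \<ge> 2 \<Longrightarrow> s_gen n m m v = v(m := 1, m+1 := (v (m+1) - 1) mod int n)"
  by (simp add: s_gen_def s_left_def entry_add_def)
lemma sm_1: "v m \<noteq> 0 \<Longrightarrow> v m = 1 \<Longrightarrow> m \<ge> 2 \<Longrightarrow> s_gen n m m v = v(m := 0, m+1 := (v (m+1) + 1) mod int n)"
  by (simp add: s_gen_def s_right_def entry_add_def)
lemma smid: "0 < i \<Longrightarrow> i < m \<Longrightarrow> s_gen n m i v = v(i := v (i+1), i+1 := v i)"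
  by (simp add: s_gen_def)

lemma s_inv:
  assumes "n \<ge> 1" "m \<ge> 2" "i \<le> m" "v \<in> yoke_V n m"
  shows "s_gen n m i (s_gen n m i v) = v"
proof -
  note D = VD[OF assms(4)]
  have m0: "v 0 mod int n = v 0" using D by simp
  have mm: "v (m+1) mod int n = v (m+1)" using D by simp
  consider "i = 0" | "i = m" | "0 < i" "i < m" using assms by linarith
  then show ?thesis
  proof cases
    case 1
    have v1: "v 1 = 0 \<or> v 1 = 1" using D(5)[of 1] assms by auto
    then show ?thesis using 1 assms m0
      by (auto simp: s0_1 s0_0 mod_simps fun_eq_iff)
  next
    case 2
    have v1: "v m = 0 \<or> v m = 1" using D(5)[of m] assms by auto
    then show ?thesis using 2 assms mm
      by (auto simp: sm_1 sm_0 mod_simps fun_eq_iff)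
  next
    case 3
    then show ?thesis by (simp add: smid fun_eq_iff)
  qed
qed

lemma s_comm:
  assumes "m \<ge> 2" "i + 1 < j" "j \<le> m"
  shows "s_gen n m i (s_gen n m j v) = s_gen n m j (s_gen n m i v)"
  using assms
  by (cases "i = 0"; cases "j = m")
     (auto simp: s_gen_def s_left_def s_right_def fun_eq_iff)

lemma s_braid:
  assumes "1 \<le> i" "i + 2 \<le> m"
  shows "s_gen n m i (s_gen n m (i+1) (s_gen n m i (s_gen n m (i+1) (s_gen n m i (s_gen n m (i+1) v))))) = v"
  using assms by (simp add: smid fun_eq_iff)




lemma rep4: "concat (replicate 4 [a,b]) = [a,b,a,b,a,b,a,b]"
  by (simp add: numeral_eq_Suc)

lemma b2_left:
  assumes "n \<ge> 1" "m \<ge> 2" "v \<in> yoke_V n m"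
  shows "word_act n m (concat (replicate 4 [0,1])) v = v"
proof -
  note D = VD[OF assms(3)]
  have m0: "v 0 mod int n = v 0" using D by simp
  have v1: "v (Suc 0) = 0 \<or> v (Suc 0) = 1" using D(5)[of 1] assms by auto
  have v2: "v (Suc (Suc 0)) = 0 \<or> v (Suc (Suc 0)) = 1" using D(5)[of 2] assms by (auto simp: numeral_2_eq_2)
  have s1: "\<And>w. s_gen n m (Suc 0) w = w(Suc 0 := w (Suc (Suc 0)), Suc (Suc 0) := w (Suc 0))" using assms
    unfolding s_gen_def by (simp add: numeral_2_eq_2)
  have a1: "\<And>w. w (Suc 0) = 1 \<Longrightarrow> s_gen n m 0 w = w(0 := (w 0 + 1) mod int n, Suc 0 := 0)"
    using s0_1 assms by simp
  have a0: "\<And>w. w (Suc 0) \<noteq> 1 \<Longrightarrow> w (Suc 0) = 0 \<Longrightarrow> s_gen n m 0 w = w(0 := (w 0 - 1) mod int n, Suc 0 := 1)"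
    using s0_0 assms by simp
  show ?thesis using v1 v2 m0 unfolding rep4 One_nat_def
    by (auto simp: a0 a1 s1 mod_simps fun_eq_iff)
qed

lemma b2_right_k:
  assumes "n \<ge> 1" "v \<in> yoke_V n (Suc (Suc k))"
  shows "word_act n (Suc (Suc k)) (concat (replicate 4 [Suc k, Suc (Suc k)])) v = v"
proof -
  note D = VD[OF assms(2)]
  have mm: "v (Suc (Suc (Suc k))) mod int n = v (Suc (Suc (Suc k)))" using D by simp
  have v1: "v (Suc (Suc k)) = 0 \<or> v (Suc (Suc k)) = 1" using D(5)[of "Suc (Suc k)"] assms by auto
  have v2: "v (Suc k) = 0 \<or> v (Suc k) = 1" using D(5)[of "Suc k"] assms by auto
  have s1: "\<And>w. s_gen n (Suc (Suc k)) (Suc k) w = w(Suc k := w (Suc (Suc k)), Suc (Suc k) := w (Suc k))"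
    using smid[of "Suc k" "Suc (Suc k)" n] by simp
  have s0: "\<And>w. w (Suc (Suc k)) = 0 \<Longrightarrow> s_gen n (Suc (Suc k)) (Suc (Suc k)) w = w(Suc (Suc k) := 1, Suc (Suc (Suc k)) := (w (Suc (Suc (Suc k))) - 1) mod int n)"
    using sm_0[of _ "Suc (Suc k)"] by simp
  have s1': "\<And>w. w (Suc (Suc k)) \<noteq> 0 \<Longrightarrow> w (Suc (Suc k)) = 1 \<Longrightarrow> s_gen n (Suc (Suc k)) (Suc (Suc k)) w = w(Suc (Suc k) := 0, Suc (Suc (Suc k)) := (w (Suc (Suc (Suc k))) + 1) mod int n)"
    using sm_1[of _ "Suc (Suc k)"] by simp
  show ?thesis using v1 v2 mm unfolding rep4
    by (auto simp: s0 s1 s1' mod_simps fun_eq_iff)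
qed

lemma b2_right:
  assumes "n \<ge> 1" "m \<ge> 2" "v \<in> yoke_V n m"
  shows "word_act n m (concat (replicate 4 [m-1,m])) v = v"
proof -
  obtain k where k: "m = Suc (Suc k)" using assms by (metis add_2_eq_Suc le_Suc_ex)
  show ?thesis using b2_right_k[of n v k] assms unfolding k by simp
qed




lemma rep3: "concat (replicate 3 [a,b]) = [a,b,a,b,a,b]"
  by (simp add: numeral_eq_Suc)

lemma word_act_append: "word_act n m (a @ b) v = word_act n m a (word_act n m b v)"
  by (induction a) auto

lemma word_act_V: "n \<ge> 1 \<Longrightarrow> m \<ge> 2 \<Longrightarrow> set w \<subseteq> {..m} \<Longrightarrow> v \<in> yoke_V n m \<Longrightarrow> word_act n m w v \<in> yoke_V n m"
  by (induction w) (auto intro: s_gen_V)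

lemma relators_set: "m \<ge> 2 \<Longrightarrow> r \<in> relators m \<Longrightarrow> set r \<subseteq> {..m}"
  unfolding relators_def by (auto simp: rep3 rep4)

lemma rel_id:
  assumes "n \<ge> 1" "m \<ge> 2" "r \<in> relators m" "v \<in> yoke_V n m"
  shows "word_act n m r v = v"
  using assms(3) unfolding relators_def
proof (elim UnE)
  assume "r \<in> {[i,i] | i. i \<le> m}"
  then show ?thesis using s_inv assms by auto
next
  assume "r \<in> {[i,j,i,j] | i j. i \<le> m \<and> j \<le> m \<and> (i + 1 < j \<or> j + 1 < i)}"
  then obtain i j where r: "r = [i,j,i,j]" "i \<le> m" "j \<le> m" "i + 1 < j \<or> j + 1 < i" by blast
  have sj: "s_gen n m j v \<in> yoke_V n m" using s_gen_V assms r by blast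
  show ?thesis
  proof (cases "i + 1 < j")
    case True
    have "s_gen n m j (s_gen n m i (s_gen n m j v)) = s_gen n m i (s_gen n m j (s_gen n m j v))"
      using s_comm[of m i j n] True r assms by simp
    then show ?thesis using r s_inv[OF assms(1,2) r(3) assms(4)] s_inv[OF assms(1,2) r(2) assms(4)] by simp
  next
    case False
    then have "j + 1 < i" using r by simp
    then have "s_gen n m j (s_gen n m i (s_gen n m j v)) = s_gen n m i (s_gen n m j (s_gen n m j v))"
      using s_comm[of m j i n] r assms by simp
    then show ?thesis using r s_inv[OF assms(1,2) r(3) assms(4)] s_inv[OF assms(1,2) r(2) assms(4)] by simp
  qed
next
  assume "r \<in> {concat (replicate 3 [i, i+1]) | i. 1 \<le> i \<and> i + 2 \<le> m}"
  then show ?thesis using s_braid by (auto simp: rep3)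
next
  assume "r \<in> {concat (replicate 4 [0, 1])}"
  then show ?thesis using b2_left assms by auto
next
  assume "r \<in> {concat (replicate 4 [m-1, m])}"
  then show ?thesis using b2_right assms by auto
qed

lemma word_eq_act:
  assumes "n \<ge> 1" "m \<ge> 2"
  shows "word_eq m w1 w2 \<Longrightarrow> (set w1 \<subseteq> {..m} \<longleftrightarrow> set w2 \<subseteq> {..m}) \<and>
     (set w1 \<subseteq> {..m} \<longrightarrow> (\<forall>v\<in>yoke_V n m. word_act n m w1 v = word_act n m w2 v))"
proof (induction rule: word_eq.induct)
  case (rel r a b)
  have rs: "set r \<subseteq> {..m}" using relators_set assms(2) rel by blast
  show ?case
  proof
    show "(set (a @ r @ b) \<subseteq> {..m}) = (set (a @ b) \<subseteq> {..m})" using rs by auto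
    show "set (a @ r @ b) \<subseteq> {..m} \<longrightarrow> (\<forall>v\<in>yoke_V n m. word_act n m (a @ r @ b) v = word_act n m (a @ b) v)"
    proof (intro impI ballI)
      fix v assume s: "set (a @ r @ b) \<subseteq> {..m}" and v: "v \<in> yoke_V n m"
      have "word_act n m b v \<in> yoke_V n m" using word_act_V[OF assms, of b v] s v by auto
      then have "word_act n m r (word_act n m b v) = word_act n m b v" using rel_id assms rel by blast
      then show "word_act n m (a @ r @ b) v = word_act n m (a @ b) v" by (simp add: word_act_append)
    qed
  qed
next
  case (refl w)
  then show ?case by simp
next
  case (sym w w')
  then show ?case by metis
next
  case (trans w1 w2 w3)
  then show ?case by metis
qed




lemma adj_imp:
  assumes "n \<ge> 1" "m \<ge> 2" "u \<in> yoke_V n m" "v \<in> yoke_V n m" "yoke_adj n m u v"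
  shows "\<exists>i\<le>m. u = s_gen n m i v \<and> u \<noteq> v"
proof -
  note Du = VD[OF assms(3)] and Dv = VD[OF assms(4)]
  obtain i where i: "i \<le> m" and oth: "\<forall>j. j \<noteq> i \<and> j \<noteq> i+1 \<longrightarrow> u j = v j"
    and c: "(u i = entry_add n m i (v i) 1 \<and> u (i+1) = entry_add n m (i+1) (v (i+1)) (-1)) \<or>
       (u i = entry_add n m i (v i) (-1) \<and> u (i+1) = entry_add n m (i+1) (v (i+1)) 1)"
    using assms(5) unfolding yoke_adj_def by blast
  consider "i = 0" | "i = m" | "0 < i" "i < m" using i by linarith
  then show ?thesis
  proof cases
    case 1
    have u1: "u 1 = 0 \<or> u 1 = 1" using Du(5)[of 1] assms by auto
    have v1: "v 1 = 0 \<or> v 1 = 1" using Dv(5)[of 1] assms by auto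
    have c': "(u 0 = (v 0 + 1) mod int n \<and> u 1 = v 1 - 1) \<or> (u 0 = (v 0 - 1) mod int n \<and> u 1 = v 1 + 1)"
      using c 1 assms(2) by (simp add: entry_add_def)
    have oth': "\<And>j. j \<noteq> 0 \<Longrightarrow> j \<noteq> 1 \<Longrightarrow> u j = v j" using oth 1 by simp
    from c' have "u = s_gen n m 0 v \<and> u \<noteq> v"
    proof
      assume h: "u 0 = (v 0 + 1) mod int n \<and> u 1 = v 1 - 1"
      then have "v 1 = 1" "u 1 = 0" using u1 v1 by auto
      then have "u 1 \<noteq> v 1" by simp
      moreover have "u = s_gen n m 0 v" using h oth' assms(2) s0_1[of v m n] \<open>v 1 = 1\<close> \<open>u 1 = 0\<close> by (auto simp: fun_eq_iff)
      ultimately show ?thesis by metis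
    next
      assume h: "u 0 = (v 0 - 1) mod int n \<and> u 1 = v 1 + 1"
      then have "v 1 = 0" "u 1 = 1" using u1 v1 by auto
      then have "u 1 \<noteq> v 1" by simp
      moreover have "u = s_gen n m 0 v" using h oth' assms(2) s0_0[of v m n] \<open>v 1 = 0\<close> \<open>u 1 = 1\<close> by (auto simp: fun_eq_iff)
      ultimately show ?thesis by metis
    qed
    then show ?thesis using 1 by blast
  next
    case 2
    have u1: "u m = 0 \<or> u m = 1" using Du(5)[of m] assms by auto
    have v1: "v m = 0 \<or> v m = 1" using Dv(5)[of m] assms by auto
    have c': "(u m = v m + 1 \<and> u (m+1) = (v (m+1) - 1) mod int n) \<or> (u m = v m - 1 \<and> u (m+1) = (v (m+1) + 1) mod int n)"
      using c 2 assms(2) by (simp add: entry_add_def)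
    have oth': "\<And>j. j \<noteq> m \<Longrightarrow> j \<noteq> m+1 \<Longrightarrow> u j = v j" using oth 2 by simp
    from c' have "u = s_gen n m m v \<and> u \<noteq> v"
    proof
      assume h: "u m = v m + 1 \<and> u (m+1) = (v (m+1) - 1) mod int n"
      then have "v m = 0" "u m = 1" using u1 v1 by auto
      then have "u m \<noteq> v m" by simp
      moreover have "u = s_gen n m m v" using h oth' assms(2) sm_0[of v m n] \<open>v m = 0\<close> \<open>u m = 1\<close> by (auto simp: fun_eq_iff)
      ultimately show ?thesis by metis
    next
      assume h: "u m = v m - 1 \<and> u (m+1) = (v (m+1) + 1) mod int n"
      then have "v m = 1" "u m = 0" using u1 v1 by auto
      then have "u m \<noteq> v m" by simp
      moreover have "u = s_gen n m m v" using h oth' assms(2) sm_1[of v m n] \<open>v m = 1\<close> \<open>u m = 0\<close> by (auto simp: fun_eq_iff)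
      ultimately show ?thesis by metis
    qed
    then show ?thesis using 2 i by blast
  next
    case 3
    have u1: "u i = 0 \<or> u i = 1" using Du(5)[of i] 3 by auto
    have v1: "v i = 0 \<or> v i = 1" using Dv(5)[of i] 3 by auto
    have u2: "u (i+1) = 0 \<or> u (i+1) = 1" using Du(5)[of "i+1"] 3 by auto
    have v2: "v (i+1) = 0 \<or> v (i+1) = 1" using Dv(5)[of "i+1"] 3 by auto
    have c': "(u i = v i + 1 \<and> u (i+1) = v (i+1) - 1) \<or> (u i = v i - 1 \<and> u (i+1) = v (i+1) + 1)"
      using c 3 by (simp add: entry_add_def)
    have oth': "\<And>j. j \<noteq> i \<Longrightarrow> j \<noteq> i+1 \<Longrightarrow> u j = v j" using oth by simp
    from c' have "u = s_gen n m i v \<and> u \<noteq> v"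
    proof
      assume h: "u i = v i + 1 \<and> u (i+1) = v (i+1) - 1"
      then have "v i = 0" "u i = 1" "v (i+1) = 1" "u (i+1) = 0" using u1 v1 u2 v2 by auto
      then have "u i \<noteq> v i" by simp
      moreover have "u = s_gen n m i v" using h oth' 3 smid[of i m n v] \<open>u i \<noteq> v i\<close> u1 v1 u2 v2 by (auto simp: fun_eq_iff)
      ultimately show ?thesis by metis
    next
      assume h: "u i = v i - 1 \<and> u (i+1) = v (i+1) + 1"
      then have "v i = 1" "u i = 0" "v (i+1) = 0" "u (i+1) = 1" using u1 v1 u2 v2 by auto
      then have "u i \<noteq> v i" by simp
      moreover have "u = s_gen n m i v" using h oth' 3 smid[of i m n v] \<open>u i \<noteq> v i\<close> u1 v1 u2 v2 by (auto simp: fun_eq_iff)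
      ultimately show ?thesis by metis
    qed
    then show ?thesis using 3 i by blast
  qed
qed

lemma s_adj:
  assumes "n \<ge> 1" "m \<ge> 2" "i \<le> m" "v \<in> yoke_V n m" "s_gen n m i v \<noteq> v"
  shows "yoke_adj n m (s_gen n m i v) v"
proof -
  note Dv = VD[OF assms(4)]
  consider "i = 0" | "i = m" | "0 < i" "i < m" using assms by linarith
  then show ?thesis
  proof cases
    case 1
    have v1: "v 1 = 0 \<or> v 1 = 1" using Dv(5)[of 1] assms by auto
    have e0: "entry_add n m 0 x d = (x + d) mod int n" for x d by (simp add: entry_add_def)
    have e1: "entry_add n m 1 x d = x + d" for x d using assms(2) by (simp add: entry_add_def)
    have a: "\<forall>j. j \<noteq> 0 \<and> j \<noteq> 0+1 \<longrightarrow> s_gen n m 0 v j = v j"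
      using assms(2) by (simp add: s_gen_def s_left_def s_right_def)
    show ?thesis unfolding yoke_adj_def 1
    proof (intro exI[of _ 0] conjI)
      show "(0::nat) \<le> m" by simp
      show "\<forall>j. j \<noteq> 0 \<and> j \<noteq> 0+1 \<longrightarrow> s_gen n m 0 v j = v j" by (rule a)
      show "s_gen n m 0 v 0 = entry_add n m 0 (v 0) 1 \<and> s_gen n m 0 v (0 + 1) = entry_add n m (0 + 1) (v (0 + 1)) (- 1) \<or>
    s_gen n m 0 v 0 = entry_add n m 0 (v 0) (- 1) \<and> s_gen n m 0 v (0 + 1) = entry_add n m (0 + 1) (v (0 + 1)) 1"
        using v1 assms(2) unfolding e0 e1 add_0 by (auto simp: s0_1 s0_0)
    qed
  next
    case 2
    have v1: "v m = 0 \<or> v m = 1" using Dv(5)[of m] assms by auto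
    have e0: "entry_add n m (m+1) x d = (x + d) mod int n" for x d by (simp add: entry_add_def)
    have e1: "entry_add n m m x d = x + d" for x d using assms(2) by (simp add: entry_add_def)
    have a: "\<forall>j. j \<noteq> m \<and> j \<noteq> m+1 \<longrightarrow> s_gen n m m v j = v j"
      using assms(2) by (simp add: s_gen_def s_left_def s_right_def)
    show ?thesis unfolding yoke_adj_def 2
    proof (intro exI[of _ m] conjI)
      show "m \<le> m" by simp
      show "\<forall>j. j \<noteq> m \<and> j \<noteq> m+1 \<longrightarrow> s_gen n m m v j = v j" by (rule a)
      show "s_gen n m m v m = entry_add n m m (v m) 1 \<and> s_gen n m m v (m + 1) = entry_add n m (m + 1) (v (m + 1)) (- 1) \<or>
    s_gen n m m v m = entry_add n m m (v m) (- 1) \<and> s_gen n m m v (m + 1) = entry_add n m (m + 1) (v (m + 1)) 1"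
        using v1 assms(2) unfolding e0 e1 by (auto simp: sm_1 sm_0)
    qed
  next
    case 3
    have v1: "v i = 0 \<or> v i = 1" using Dv(5)[of i] 3 by auto
    have v2: "v (i+1) = 0 \<or> v (i+1) = 1" using Dv(5)[of "i+1"] 3 by auto
    have ne: "v i \<noteq> v (i+1)" using assms(5) 3 by (auto simp: smid)
    show ?thesis unfolding yoke_adj_def using 3 v1 v2 ne
      by (intro exI[of _ i]) (auto simp: smid entry_add_def)
  qed
qed

lemma part3:
  assumes "n \<ge> 1" "m \<ge> 2" "u \<in> yoke_V n m" "v \<in> yoke_V n m"
  shows "yoke_adj n m u v \<longleftrightarrow> schreier_adj n m u v"
proof
  assume "yoke_adj n m u v"
  then obtain i where i1: "i \<le> m" and i2: "u = s_gen n m i v" and i3: "u \<noteq> v"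
    using adj_imp[OF assms] by blast
  have vi: "v = s_gen n m i u" unfolding i2 by (rule s_inv[OF assms(1,2) i1 assms(4), symmetric])
  have "v \<noteq> u \<and> (\<exists>i\<le>m. v = s_gen n m i u)"
  proof
    show "v \<noteq> u" using i3 by (rule not_sym)
    show "\<exists>i\<le>m. v = s_gen n m i u" by (rule exI[of _ i], rule conjI[OF i1 vi])
  qed
  then show "schreier_adj n m u v" unfolding schreier_adj_def .
next
  assume "schreier_adj n m u v"
  then obtain i where i1: "i \<le> m" and i2: "v = s_gen n m i u" and i3: "u \<noteq> v"
    unfolding schreier_adj_def by (metis)
  have u: "u = s_gen n m i v" unfolding i2 by (rule s_inv[OF assms(1,2) i1 assms(3), symmetric])
  have ne: "s_gen n m i v \<noteq> v" using i3 unfolding u .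
  have "yoke_adj n m (s_gen n m i v) v" using s_adj[OF assms(1,2) i1 assms(4) ne] .
  then show "yoke_adj n m u v" unfolding u[symmetric] .
qed


theorem corollary3p17:
  fixes n m :: nat
  assumes "n \<ge> 1" and "m \<ge> 2"
  shows "(\<forall>i\<le>m. \<forall>v\<in>yoke_V n m. s_gen n m i v \<in> yoke_V n m)
       \<and> (\<forall>w1 w2. set w1 \<subseteq> {..m} \<longrightarrow> set w2 \<subseteq> {..m} \<longrightarrow> word_eq m w1 w2 \<longrightarrow>
            (\<forall>v\<in>yoke_V n m. word_act n m w1 v = word_act n m w2 v))
       \<and> (\<forall>u\<in>yoke_V n m. \<forall>v\<in>yoke_V n m. yoke_adj n m u v \<longleftrightarrow> schreier_adj n m u v)"
proof (intro conjI allI ballI impI)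
  fix i v assume "i \<le> m" "v \<in> yoke_V n m"
  then show "s_gen n m i v \<in> yoke_V n m" using s_gen_V assms by blast
next
  fix w1 w2 v assume "set w1 \<subseteq> {..m}" "set w2 \<subseteq> {..m}" "word_eq m w1 w2" "v \<in> yoke_V n m"
  then show "word_act n m w1 v = word_act n m w2 v" using word_eq_act[OF assms] by blast
next
  fix u v assume "u \<in> yoke_V n m" "v \<in> yoke_V n m"
  then show "yoke_adj n m u v \<longleftrightarrow> schreier_adj n m u v" using part3[OF assms] by blast
qed

end
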